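(* Let $\mathcal C\subseteq 2^{[n]}$ be a stable hyperplane code. Then $\mathcal C$ has no strong bitflip local obstructions; that is, there is no pair $(g,\tau)$ with $g\in(\mathbb Z_2)^n$ and $\tau\subseteq[n]$ such that $\tau\notin g\cdot\mathcal C$ and $\operatorname{link}_\tau\Delta(g\cdot\mathcal C)$ is not collapsible.
   Context: A code is a subset $\mathcal C\subseteq 2^{[n]}$, $[n]=\{1,\dots,n\}$. An oriented affine hyperplane in $\mathbb R^d$ is $H=\{x: w\cdot x-h=0\}$ with $w\in\mathbb R^d\setminus\{0\}$, $h\in\mathbb R$, and open half-spaces $H^+=\{x:w\cdot x-h>0\}$, $H^-=\{x:w\cdot x-h<0\}$. For hyperplanes $\mathcal H=\{H_1,\dots,H_n\}$ in $\mathbb R^d$ and an open convex set $X\subseteq\mathbb R^d$, the atom of $\sigma\subseteq[n]$ is $A_\sigma=\bigl(\bigcap_{i\in\sigma}(H_i^+\cap X)\bigr)\setminus\bigcup_{j\notin\sigma}H_j^+$ (for $\sigma=\emptyset$, $A_\emptyset=X\setminus\bigcup_{i}H_i^+$), and $\mathrm{code}(\mathcal H,X)=\{\sigma\subseteq[n]:A_\sigma\neq\emptyset\}$. The pair $(\mathcal H,X)$ is stable if $X$ is open and convex and for every $\sigma\subseteq[n]$ with $X\cap\bigcap_{i\in\sigma}H_i\neq\emptyset$, the affine subspace $\bigcap_{i\in\sigma}H_i$ has dimension $d-|\sigma|$. A stable hyperplane code is a code equal to $\mathrm{code}(\mathcal H,X)$ for some stable pair. The group $(\mathbb Z_2)^n$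 acts on $2^{[n]}$ by letting the generator $e_i$ send $\sigma$ to $\sigma\cup\{i\}$ if $i\notin\sigma$ and to $\sigma\setminus\{i\}$ if $i\in\sigma$; $g\cdot\mathcal C=\{g\cdot\sigma:\sigma\in\mathcal C\}$. $\Delta(\mathcal C)=\{\tau:\tau\subseteq\sigma\text{ for some }\sigma\in\mathcal C\}$. For a simplicial complex $\Delta$ and $\tau\subseteq$ its vertex set, $\operatorname{link}_\tau\Delta=\{\nu\in\Delta:\nu\cap\tau=\emptyset,\ \nu\cup\tau\in\Delta\}$ (the void complex $\{\}$ if $\tau\notin\Delta$). A free pair in $\Delta$ is $(\sigma,\tau)$ with $\tau$ a facet, $\sigma\subsetneq\tau$, and $\sigma$ contained in no other facet; the collapse along $\sigma$ replaces $\Delta$ by $\{\nu\in\Delta:\nu\not\supseteq\sigma\}$. $\Delta$ is collapsible if a finite sequence of collapses yields the void complex $\{\}$ (with no faces); in particular $\{\}$ is collapsible while $\{\emptyset\}$ is not. *)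

theory Defs
  imports "HOL-Analysis.Analysis"
begin

text \<open>Hyperplanes H_i = {x. w i \<bullet> x - h i = 0}, i in {1..n}, in a Euclidean space 'a (R^d, d = DIM('a)).\<close>

definition atom :: "nat \<Rightarrow> (nat \<Rightarrow> 'a::euclidean_space) \<Rightarrow> (nat \<Rightarrow> real) \<Rightarrow> 'a set \<Rightarrow> nat set \<Rightarrow> 'a set" where
  "atom n w h X \<sigma> =
     (\<Inter>i\<in>\<sigma>. {x. w i \<bullet> x - h i > 0} \<inter> X) \<inter> X
       - (\<Union>j\<in>{1..n} - \<sigma>. {x. w j \<bullet> x - h j > 0})"

definition hcode :: "nat \<Rightarrow> (nat \<Rightarrow> 'a::euclidean_space) \<Rightarrow> (nat \<Rightarrow> real) \<Rightarrow> 'a set \<Rightarrow> nat set set" where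
  "hcode n w h X = {\<sigma>. \<sigma> \<subseteq> {1..n} \<and> atom n w h X \<sigma> \<noteq> {}}"

definition stable_pair :: "nat \<Rightarrow> (nat \<Rightarrow> 'a::euclidean_space) \<Rightarrow> (nat \<Rightarrow> real) \<Rightarrow> 'a set \<Rightarrow> bool" where
  "stable_pair n w h X \<longleftrightarrow>
     (\<forall>i\<in>{1..n}. w i \<noteq> 0) \<and> open X \<and> convex X \<and>
     (\<forall>\<sigma>. \<sigma> \<subseteq> {1..n} \<longrightarrow>
        X \<inter> (\<Inter>i\<in>\<sigma>. {x. w i \<bullet> x - h i = 0}) \<noteq> {} \<longrightarrow>
        aff_dim (\<Inter>i\<in>\<sigma>. {x. w i \<bullet> x - h i = 0}) = int DIM('a) - int (card \<sigma>))"

text \<open>Bitflip action: g \<subseteq> {1..n} encodes the element sum_{i in g} e_i of (Z_2)^n.\<close>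
definition bitflip :: "nat set \<Rightarrow> nat set \<Rightarrow> nat set" where
  "bitflip g \<sigma> = (\<sigma> - g) \<union> (g - \<sigma>)"

definition Delta :: "nat set set \<Rightarrow> nat set set" where
  "Delta C = {\<tau>. \<exists>\<sigma>\<in>C. \<tau> \<subseteq> \<sigma>}"

definition link :: "nat set \<Rightarrow> nat set set \<Rightarrow> nat set set" where
  "link \<tau> K = (if \<tau> \<in> K then {\<nu>\<in>K. \<nu> \<inter> \<tau> = {} \<and> \<nu> \<union> \<tau> \<in> K} else {})"

definition facet :: "nat set set \<Rightarrow> nat set \<Rightarrow> bool" where
  "facet K \<tau> \<longleftrightarrow> \<tau> \<in> K \<and> (\<forall>\<nu>\<in>K. \<tau> \<subseteq> \<nu> \<longrightarrow> \<nu> = \<tau>)"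

definition free_pair :: "nat set set \<Rightarrow> nat set \<Rightarrow> nat set \<Rightarrow> bool" where
  "free_pair K \<sigma> \<tau> \<longleftrightarrow> facet K \<tau> \<and> \<sigma> \<subset> \<tau> \<and>
     (\<forall>\<nu>. facet K \<nu> \<and> \<sigma> \<subseteq> \<nu> \<longrightarrow> \<nu> = \<tau>)"

definition collapse :: "nat set set \<Rightarrow> nat set \<Rightarrow> nat set set" where
  "collapse K \<sigma> = {\<nu>\<in>K. \<not> \<sigma> \<subseteq> \<nu>}"

inductive collapsible :: "nat set set \<Rightarrow> bool" where
  void: "collapsible {}"
| step: "free_pair K \<sigma> \<tau> \<Longrightarrow> collapsible (collapse K \<sigma>) \<Longrightarrow> collapsible K"

end

theory Submission
  imports Defs
begin


lemma ins_inj: "k \<notin> A \<Longrightarrow> k \<notin> B \<Longrightarrow> insert k A = insert k B \<Longrightarrow> A = B"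
  by (metis Diff_insert_absorb)

lemma cone_collapse:
  assumes "collapsible M" "M \<subseteq> B" "\<forall>\<nu>\<in>B. k \<notin> \<nu>" "collapsible B"
  shows "collapsible (B \<union> insert k ` M)"
  using assms
proof (induction M rule: collapsible.induct)
  case void
  then show ?case by simp
next
  case (step M \<sigma> \<tau>)
  let ?K = "B \<union> insert k ` M"
  have fp: "facet M \<tau>" "\<sigma> \<subset> \<tau>" "\<forall>\<nu>. facet M \<nu> \<and> \<sigma> \<subseteq> \<nu> \<longrightarrow> \<nu> = \<tau>"
    using step.hyps(1) unfolding free_pair_def by auto
  have kM: "\<forall>\<nu>\<in>M. k \<notin> \<nu>" using step.prems by auto
  have tM: "\<tau> \<in> M" using fp(1) unfolding facet_def by auto
  have ks: "k \<notin> \<sigma>" "k \<notin> \<tau>" using kM tM fp(2) by auto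
  have col: "collapse ?K (insert k \<sigma>) = B \<union> insert k ` collapse M \<sigma>"
  proof -
    have "\<And>\<nu>. \<nu> \<in> M \<Longrightarrow> (insert k \<sigma> \<subseteq> insert k \<nu>) = (\<sigma> \<subseteq> \<nu>)"
      using kM ks by blast
    then show ?thesis unfolding collapse_def using step.prems(2,3) ks by auto
  qed
  have facK: "facet ?K (insert k \<tau>)"
    unfolding facet_def
  proof (intro conjI ballI impI)
    show "insert k \<tau> \<in> ?K" using tM by auto
    fix \<nu> assume "\<nu> \<in> ?K" "insert k \<tau> \<subseteq> \<nu>"
    then obtain \<mu> where "\<mu> \<in> M" "\<nu> = insert k \<mu>" using step.prems by auto
    then show "\<nu> = insert k \<tau>"
      using fp(1) kM ks \<open>insert k \<tau> \<subseteq> \<nu>\<close> unfolding facet_def by blast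
  qed
  have fpK: "free_pair ?K (insert k \<sigma>) (insert k \<tau>)"
    unfolding free_pair_def
  proof (intro conjI allI impI)
    show "facet ?K (insert k \<tau>)" by (rule facK)
    show "insert k \<sigma> \<subset> insert k \<tau>" using fp(2) ks by (auto simp: psubset_eq)
    fix F assume F: "facet ?K F \<and> insert k \<sigma> \<subseteq> F"
    then obtain \<mu> where mu: "\<mu> \<in> M" "F = insert k \<mu>" using step.prems unfolding facet_def by auto
    have "facet M \<mu>" unfolding facet_def
    proof (intro conjI ballI impI)
      show "\<mu> \<in> M" by fact
      fix \<mu>' assume "\<mu>' \<in> M" "\<mu> \<subseteq> \<mu>'"
      then have "insert k \<mu>' \<in> ?K" "F \<subseteq> insert k \<mu>'" using mu by auto
      then have "insert k \<mu>' = F" using F unfolding facet_def by blast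
      moreover have "k \<notin> \<mu>'" "k \<notin> \<mu>" using mu kM \<open>\<mu>' \<in> M\<close> by auto
      ultimately show "\<mu>' = \<mu>" using mu ins_inj by metis
    qed
    moreover have "\<sigma> \<subseteq> \<mu>" using F mu ks kM by blast
    ultimately show "F = insert k \<tau>" using fp(3) mu by blast
  qed
  have "collapse M \<sigma> \<subseteq> B" using step.prems(1) unfolding collapse_def by auto
  then have "collapsible (B \<union> insert k ` collapse M \<sigma>)"
    using step.IH step.prems by blast
  then show ?case using collapsible.step[OF fpK] col by simp
qed

lemma comb:
  assumes "finite L" "\<forall>\<nu>\<in>B. k \<notin> \<nu>" "\<forall>\<nu>\<in>L. k \<notin> \<nu>"
    "\<forall>\<nu>\<in>B. \<forall>\<mu>. \<mu> \<subseteq> \<nu> \<longrightarrow> \<mu> \<in> B" "collapsible B" "collapsible (L \<inter> B)"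
  shows "collapsible (B \<union> L \<union> insert k ` L)"
  using assms
proof (induction "card (L - B)" arbitrary: L rule: less_induct)
  case less
  show ?case
  proof (cases "L \<subseteq> B")
    case True
    then have "B \<union> L \<union> insert k ` L = B \<union> insert k ` (L \<inter> B)" by auto
    then show ?thesis using cone_collapse[OF less.prems(6) _ less.prems(2) less.prems(5)] by simp
  next
    case False
    then obtain \<nu> where nu: "\<nu> \<in> L - B" "\<forall>b\<in>L - B. \<nu> \<subseteq> b \<longrightarrow> \<nu> = b"
      using finite_has_maximal[of "L - B"] less.prems(1) by blast
    let ?K = "B \<union> L \<union> insert k ` L"
    have kn: "k \<notin> \<nu>" using nu less.prems by auto
    have sup: "\<forall>F\<in>?K. \<nu> \<subseteq> F \<longrightarrow> F = \<nu> \<or> F = insert k \<nu>"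
    proof (intro ballI impI)
      fix F assume F: "F \<in> ?K" "\<nu> \<subseteq> F"
      show "F = \<nu> \<or> F = insert k \<nu>"
      proof -
        { assume "F \<in> B" then have "\<nu> \<in> B" using F less.prems(4) by blast
          then have False using nu by blast }
        moreover
        { assume "F \<in> L" "F \<notin> B" then have "F = \<nu>" using nu F by blast }
        moreover
        { fix \<mu> assume "\<mu> \<in> L" "F = insert k \<mu>"
          then have "\<nu> \<subseteq> \<mu>" using F kn by blast
          moreover have "\<mu> \<notin> B" using \<open>\<nu> \<subseteq> \<mu>\<close> less.prems(4) nu by blast
          ultimately have "\<mu> = \<nu>" using nu \<open>\<mu> \<in> L\<close> by blast
          then have "F = insert k \<nu>" using \<open>F = insert k \<mu>\<close> by simp }
        ultimately show ?thesis using F(1) by blast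
      qed
    qed
    have inK: "insert k \<nu> \<in> ?K" using nu by blast
    have facK: "facet ?K (insert k \<nu>)"
      unfolding facet_def
    proof (intro conjI ballI impI)
      show "insert k \<nu> \<in> ?K" by fact
      fix F assume "F \<in> ?K" "insert k \<nu> \<subseteq> F"
      moreover have "\<nu> \<subseteq> F" using calculation by blast
      ultimately show "F = insert k \<nu>" using sup kn by blast
    qed
    have fpK: "free_pair ?K \<nu> (insert k \<nu>)"
      unfolding free_pair_def
    proof (intro conjI allI impI)
      show "facet ?K (insert k \<nu>)" by fact
      show "\<nu> \<subset> insert k \<nu>" using kn by blast
      fix F assume F: "facet ?K F \<and> \<nu> \<subseteq> F"
      then have "F = \<nu> \<or> F = insert k \<nu>" using sup unfolding facet_def by blast
      moreover have "F \<noteq> \<nu>"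
      proof
        assume "F = \<nu>"
        then have "insert k \<nu> = \<nu>" using F inK unfolding facet_def by blast
        then show False using kn by blast
      qed
      ultimately show "F = insert k \<nu>" by blast
    qed
    let ?L = "L - {\<nu>}"
    have col: "collapse ?K \<nu> = B \<union> ?L \<union> insert k ` ?L"
    proof -
      have "collapse ?K \<nu> = ?K - {\<nu>, insert k \<nu>}"
        unfolding collapse_def using sup by auto
      also have "\<dots> = B \<union> ?L \<union> insert k ` ?L"
      proof -
        have "\<And>\<mu>. \<mu> \<in> L \<Longrightarrow> insert k \<mu> = insert k \<nu> \<Longrightarrow> \<mu> = \<nu>"
        proof -
          fix \<mu> assume "\<mu> \<in> L" "insert k \<mu> = insert k \<nu>"
          moreover have "k \<notin> \<mu>" using less.prems(3) \<open>\<mu> \<in> L\<close> by auto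
          ultimately show "\<mu> = \<nu>" using kn ins_inj by metis
        qed
        moreover have "\<nu> \<notin> B" "insert k \<nu> \<notin> B" "insert k \<nu> \<notin> L"
          using nu less.prems(2,3) by auto
        moreover have "\<And>\<mu>. insert k \<mu> \<noteq> \<nu>" using kn by auto
        ultimately show ?thesis by auto
      qed
      finally show ?thesis .
    qed
    have "card (?L - B) < card (L - B)"
      using nu less.prems(1) by (metis Diff_insert2 card_Diff1_less finite_Diff insert_Diff1 Diff_insert)
    moreover have "?L \<inter> B = L \<inter> B" using nu by auto
    ultimately have "collapsible (B \<union> ?L \<union> insert k ` ?L)"
      using less.hyps[of ?L] less.prems by auto
    then show ?thesis using collapsible.step[OF fpK] col by simp
  qed
qed



definition hyp :: "(nat \<Rightarrow> 'a::euclidean_space) \<Rightarrow> (nat \<Rightarrow> real) \<Rightarrow> nat set \<Rightarrow> 'a set" where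
  "hyp w h E = {x. \<forall>i\<in>E. w i \<bullet> x = h i}"

definition nerve :: "(nat \<Rightarrow> 'a::euclidean_space) \<Rightarrow> (nat \<Rightarrow> real) \<Rightarrow> nat set \<Rightarrow> 'a set \<Rightarrow> nat set set" where
  "nerve w h J U = {\<nu>. \<nu> \<subseteq> J \<and> (\<exists>x\<in>U. \<forall>j\<in>\<nu>. h j < w j \<bullet> x)}"

lemma stable_subset:
  assumes "stable_pair n w h X" "Y \<subseteq> X" "open Y" "convex Y"
  shows "stable_pair n w h Y"
  using assms unfolding stable_pair_def by blast

lemma stable_dir:
  assumes st: "stable_pair n w h (X::'a::euclidean_space set)" and x: "x \<in> X" "x \<in> hyp w h (insert k E)"
    and E: "E \<subseteq> {1..n}" and k: "k \<in> {1..n}" "k \<notin> E"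
  shows "\<exists>v. (\<forall>i\<in>E. w i \<bullet> v = 0) \<and> w k \<bullet> v \<noteq> 0"
proof (rule ccontr)
  assume "\<not> ?thesis"
  then have nv: "\<And>v. (\<forall>i\<in>E. w i \<bullet> v = 0) \<Longrightarrow> w k \<bullet> v = 0" by blast
  have eqI: "\<And>F. (\<Inter>i\<in>F. {x. w i \<bullet> x - h i = 0}) = hyp w h F" unfolding hyp_def by auto
  have "hyp w h E = hyp w h (insert k E)"
  proof
    show "hyp w h (insert k E) \<subseteq> hyp w h E" unfolding hyp_def by auto
    show "hyp w h E \<subseteq> hyp w h (insert k E)"
    proof
      fix y assume y: "y \<in> hyp w h E"
      have "\<forall>i\<in>E. w i \<bullet> (y - x) = 0" using x y unfolding hyp_def by (auto simp: inner_diff_right)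
      then have "w k \<bullet> (y - x) = 0" by (rule nv)
      then show "y \<in> hyp w h (insert k E)" using x y unfolding hyp_def by (auto simp: inner_diff_right)
    qed
  qed
  moreover have "aff_dim (hyp w h E) = int DIM('a) - int (card E)"
    using st E x unfolding stable_pair_def eqI hyp_def by blast
  moreover have "aff_dim (hyp w h (insert k E)) = int DIM('a) - int (card (insert k E))"
    using st E k x unfolding stable_pair_def eqI by blast
  moreover have "card (insert k E) = card E + 1"
    using k E finite_subset[OF E] by simp
  ultimately show False by simp
qed

lemma stable_pert:
  assumes st: "stable_pair n w h (X::'a::euclidean_space set)" and x: "x \<in> X" "x \<in> hyp w h (insert k E)"
    and E: "E \<subseteq> {1..n}" and k: "k \<in> {1..n}" "k \<notin> E" and s: "s \<noteq> 0"
  shows "\<exists>y\<in>X. y \<in> hyp w h E \<and> (w k \<bullet> y - h k) * s > 0 \<and>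
     (\<forall>j\<in>{1..n}. h j < w j \<bullet> x \<longrightarrow> h j < w j \<bullet> y) \<and>
     (\<forall>j\<in>{1..n}. w j \<bullet> x < h j \<longrightarrow> w j \<bullet> y < h j)"
proof -
  obtain v0 where v0: "\<forall>i\<in>E. w i \<bullet> v0 = 0" "w k \<bullet> v0 \<noteq> 0"
    using stable_dir[OF assms(1-6)] by blast
  define v where "v = (s / (w k \<bullet> v0)) *\<^sub>R v0"
  have vE: "\<forall>i\<in>E. w i \<bullet> v = 0" using v0 unfolding v_def by simp
  have vk: "w k \<bullet> v = s" using v0 unfolding v_def by simp
  have lim: "((\<lambda>t. x + t *\<^sub>R v) \<longlongrightarrow> x) (at_right 0)"
  proof -
    have "((\<lambda>t. x + t *\<^sub>R v) \<longlongrightarrow> x + 0 *\<^sub>R v) (at_right 0)"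
      by (intro tendsto_intros)
    then show ?thesis by simp
  qed
  have openX: "open X" using st unfolding stable_pair_def by blast
  have ev1: "eventually (\<lambda>t. x + t *\<^sub>R v \<in> X) (at_right 0)"
    using topological_tendstoD[OF lim openX x(1)] .
  have ev2: "eventually (\<lambda>t. \<forall>j\<in>{1..n}. h j < w j \<bullet> x \<longrightarrow> h j < w j \<bullet> (x + t *\<^sub>R v)) (at_right 0)"
  proof (rule eventually_ball_finite, simp, intro ballI)
    fix j
    have l: "((\<lambda>t. w j \<bullet> (x + t *\<^sub>R v)) \<longlongrightarrow> w j \<bullet> x) (at_right 0)"
      using lim by (intro tendsto_intros)
    show "eventually (\<lambda>t. h j < w j \<bullet> x \<longrightarrow> h j < w j \<bullet> (x + t *\<^sub>R v)) (at_right 0)"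
    proof (cases "h j < w j \<bullet> x")
      case True
      then show ?thesis using order_tendstoD(1)[OF l True] by (auto elim: eventually_mono)
    qed simp
  qed
  have ev3: "eventually (\<lambda>t. \<forall>j\<in>{1..n}. w j \<bullet> x < h j \<longrightarrow> w j \<bullet> (x + t *\<^sub>R v) < h j) (at_right 0)"
  proof (rule eventually_ball_finite, simp, intro ballI)
    fix j
    have l: "((\<lambda>t. w j \<bullet> (x + t *\<^sub>R v)) \<longlongrightarrow> w j \<bullet> x) (at_right 0)"
      using lim by (intro tendsto_intros)
    show "eventually (\<lambda>t. w j \<bullet> x < h j \<longrightarrow> w j \<bullet> (x + t *\<^sub>R v) < h j) (at_right 0)"
    proof (cases "w j \<bullet> x < h j")
      case True
      then show ?thesis using order_tendstoD(2)[OF l True] by (auto elim: eventually_mono)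
    qed simp
  qed
  have ev4: "eventually (\<lambda>t::real. 0 < t) (at_right 0)" by (rule eventually_at_right_less)
  have "eventually (\<lambda>t. x + t *\<^sub>R v \<in> X \<and> (\<forall>j\<in>{1..n}. h j < w j \<bullet> x \<longrightarrow> h j < w j \<bullet> (x + t *\<^sub>R v))
     \<and> (\<forall>j\<in>{1..n}. w j \<bullet> x < h j \<longrightarrow> w j \<bullet> (x + t *\<^sub>R v) < h j) \<and> 0 < t) (at_right 0)"
    using ev1 ev2 ev3 ev4 by (auto simp: eventually_conj_iff)
  then obtain t where t: "x + t *\<^sub>R v \<in> X" "\<forall>j\<in>{1..n}. h j < w j \<bullet> x \<longrightarrow> h j < w j \<bullet> (x + t *\<^sub>R v)"
     "\<forall>j\<in>{1..n}. w j \<bullet> x < h j \<longrightarrow> w j \<bullet> (x + t *\<^sub>R v) < h j" "0 < t"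
    using eventually_happens'[OF trivial_limit_at_right_real] by blast
  have "x + t *\<^sub>R v \<in> hyp w h E" using x(2) vE unfolding hyp_def by (simp add: inner_add_right)
  moreover have "(w k \<bullet> (x + t *\<^sub>R v) - h k) * s > 0"
  proof -
    have "w k \<bullet> (x + t *\<^sub>R v) - h k = t * s" using x(2) vk unfolding hyp_def by (simp add: inner_add_right)
    moreover have "s * s > 0" using s by (cases "s > 0") (auto simp: mult_pos_pos mult_neg_neg)
    ultimately show ?thesis using t(4) by (simp add: mult.assoc mult_pos_pos)
  qed
  ultimately show ?thesis using t by blast
qed

lemma stable_generic:
  assumes st: "stable_pair n w h (X::'a::euclidean_space set)" and x: "x \<in> X"
  shows "\<exists>y\<in>X. (\<forall>i\<in>{1..n}. w i \<bullet> y \<noteq> h i) \<and>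
           {i\<in>{1..n}. h i < w i \<bullet> y} = {i\<in>{1..n}. h i < w i \<bullet> x}"
  using x
proof (induction "card {i\<in>{1..n}. w i \<bullet> x = h i}" arbitrary: x rule: less_induct)
  case less
  let ?S = "{i\<in>{1..n}. w i \<bullet> x = h i}"
  show ?case
  proof (cases "?S = {}")
    case True
    then show ?thesis using less.prems by blast
  next
    case False
    then obtain k where k: "k \<in> ?S" by blast
    let ?E = "?S - {k}"
    have xh: "x \<in> hyp w h (insert k ?E)" using k unfolding hyp_def by auto
    obtain y where y: "y \<in> X" "y \<in> hyp w h ?E" "(w k \<bullet> y - h k) * (-1) > 0"
      "\<forall>j\<in>{1..n}. h j < w j \<bullet> x \<longrightarrow> h j < w j \<bullet> y"
      "\<forall>j\<in>{1..n}. w j \<bullet> x < h j \<longrightarrow> w j \<bullet> y < h j"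
    proof -
      have Esub: "?E \<subseteq> {1..n}" by auto
      have k1: "k \<in> {1..n}" "k \<notin> ?E" using k by auto
      show ?thesis using stable_pert[OF st less.prems xh Esub k1, where s="-1"] that by auto
    qed
    have Sy: "{i\<in>{1..n}. w i \<bullet> y = h i} = ?E"
    proof (intro set_eqI iffI)
      fix i assume i: "i \<in> {i\<in>{1..n}. w i \<bullet> y = h i}"
      then have "i \<noteq> k" using y(3) by auto
      moreover have "w i \<bullet> x = h i"
        using i y(4,5) by (metis (mono_tags, lifting) mem_Collect_eq not_less_iff_gr_or_eq)
      ultimately show "i \<in> ?E" using i by auto
    next
      fix i assume "i \<in> ?E" then show "i \<in> {i\<in>{1..n}. w i \<bullet> y = h i}" using y(2) unfolding hyp_def by auto
    qed
    have "card ?E < card ?S" using k by (intro psubset_card_mono) auto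
    then obtain z where z: "z \<in> X" "\<forall>i\<in>{1..n}. w i \<bullet> z \<noteq> h i"
        "{i\<in>{1..n}. h i < w i \<bullet> z} = {i\<in>{1..n}. h i < w i \<bullet> y}"
      using less.hyps[of y] Sy y(1) by auto
    have "{i\<in>{1..n}. h i < w i \<bullet> y} = {i\<in>{1..n}. h i < w i \<bullet> x}"
    proof (intro set_eqI iffI)
      fix i assume i: "i \<in> {i\<in>{1..n}. h i < w i \<bullet> y}"
      show "i \<in> {i\<in>{1..n}. h i < w i \<bullet> x}"
      proof (rule ccontr)
        assume "\<not> ?thesis"
        then have "w i \<bullet> x < h i \<or> w i \<bullet> x = h i" using i by auto
        then show False
        proof
          assume "w i \<bullet> x < h i" then show False using y(5) i by force
        next
          assume "w i \<bullet> x = h i"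
          then have "i \<in> ?S" using i by auto
          then have "i = k \<or> i \<in> ?E" by blast
          then show False using y(2,3) i unfolding hyp_def by auto
        qed
      qed
    next
      fix i assume "i \<in> {i\<in>{1..n}. h i < w i \<bullet> x}" then show "i \<in> {i\<in>{1..n}. h i < w i \<bullet> y}" using y(4) by auto
    qed
    then show ?thesis using z by auto
  qed
qed



lemma core:
  assumes "stable_pair n w h (X::'a::euclidean_space set)" "E \<subseteq> {1..n}" "J \<subseteq> {1..n}" "J \<inter> E = {}"
    "\<forall>x\<in>X \<inter> hyp w h E. \<exists>j\<in>J. h j < w j \<bullet> x"
  shows "collapsible (nerve w h J (X \<inter> hyp w h E))"
  using assms
proof (induction "card J" arbitrary: X E J rule: less_induct)
  case less
  note st = less.prems(1) and E = less.prems(2) and J = less.prems(3) and JE = less.prems(4)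
    and cov = less.prems(5)
  have finJ: "finite J" using J finite_subset by blast
  show ?case
  proof (cases "X \<inter> hyp w h E = {}")
    case True
    then have "nerve w h J (X \<inter> hyp w h E) = {}" unfolding nerve_def by auto
    then show ?thesis by (simp add: collapsible.void)
  next
    case False
    then obtain x0 where "x0 \<in> X \<inter> hyp w h E" by blast
    then obtain k where kJ: "k \<in> J" using cov by blast
    define J' where "J' = J - {k}"
    have cardJ': "card J' < card J" unfolding J'_def using kJ finJ by (meson card_Diff1_less)
    have kE: "k \<notin> E" using kJ JE by blast
    have kn: "k \<in> {1..n}" using kJ J by blast
    define Xm where "Xm = X \<inter> {x. w k \<bullet> x < h k}"
    define Xp where "Xp = X \<inter> {x. w k \<bullet> x > h k}"
    have openX: "open X" and convX: "convex X" using st unfolding stable_pair_def by auto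
    have stm: "stable_pair n w h Xm" unfolding Xm_def
      by (rule stable_subset[OF st]) (auto intro: open_Int openX open_halfspace_lt convex_Int convX convex_halfspace_lt)
    define B where "B = nerve w h J' (Xm \<inter> hyp w h E)"
    define L where "L = nerve w h J' (Xp \<inter> hyp w h E)"
    define M where "M = nerve w h J' (X \<inter> hyp w h (insert k E))"
    have colB: "collapsible B" unfolding B_def
    proof (rule less.hyps[OF cardJ' stm E])
      show "J' \<subseteq> {1..n}" "J' \<inter> E = {}" using J JE unfolding J'_def by auto
      show "\<forall>x\<in>Xm \<inter> hyp w h E. \<exists>j\<in>J'. h j < w j \<bullet> x"
        using cov unfolding Xm_def J'_def by fastforce
    qed
    have colM: "collapsible M" unfolding M_def
    proof (rule less.hyps[OF cardJ' st])
      show "insert k E \<subseteq> {1..n}" using E kn by auto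
      show "J' \<subseteq> {1..n}" "J' \<inter> insert k E = {}" using J JE unfolding J'_def by auto
      show "\<forall>x\<in>X \<inter> hyp w h (insert k E). \<exists>j\<in>J'. h j < w j \<bullet> x"
        using cov unfolding hyp_def J'_def by fastforce
    qed
    have pert: "\<exists>y\<in>X. y \<in> hyp w h E \<and> (w k \<bullet> y - h k) * s > 0 \<and> (\<forall>j\<in>\<nu>. h j < w j \<bullet> y)"
      if a: "x \<in> X" "x \<in> hyp w h (insert k E)" "\<nu> \<subseteq> J" "\<forall>j\<in>\<nu>. h j < w j \<bullet> x" "s \<noteq> 0" for x \<nu> s
    proof -
      obtain y where "y\<in>X" "y \<in> hyp w h E" "(w k \<bullet> y - h k) * s > 0"
        "\<forall>j\<in>{1..n}. h j < w j \<bullet> x \<longrightarrow> h j < w j \<bullet> y"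
        using stable_pert[OF st a(1,2) E kn kE a(5)] by blast
      then show ?thesis using a(3,4) J by blast
    qed
    have eq1: "nerve w h J (X \<inter> hyp w h E) = B \<union> L \<union> insert k ` L"
    proof (intro set_eqI iffI)
      fix \<nu> assume "\<nu> \<in> nerve w h J (X \<inter> hyp w h E)"
      then obtain x where nu: "\<nu> \<subseteq> J" "x \<in> X" "x \<in> hyp w h E" "\<forall>j\<in>\<nu>. h j < w j \<bullet> x"
        unfolding nerve_def by blast
      have plus: "\<nu> \<in> B \<union> L \<union> insert k ` L" if "y \<in> X" "y \<in> hyp w h E" "h k < w k \<bullet> y" "\<forall>j\<in>\<nu>. h j < w j \<bullet> y" for y
      proof -
        have "\<nu> - {k} \<in> L" unfolding L_def nerve_def Xp_def J'_def using that nu(1) by auto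
        show ?thesis
        proof (cases "k \<in> \<nu>")
          case True
          then have "\<nu> = insert k (\<nu> - {k})" by auto
          then show ?thesis using \<open>\<nu> - {k} \<in> L\<close> by blast
        next
          case False
          then show ?thesis using \<open>\<nu> - {k} \<in> L\<close> by simp
        qed
      qed
      consider "w k \<bullet> x < h k" | "h k < w k \<bullet> x" | "w k \<bullet> x = h k" by fastforce
      then show "\<nu> \<in> B \<union> L \<union> insert k ` L"
      proof cases
        case 1
        then have "k \<notin> \<nu>" using nu(4) by fastforce
        then have "\<nu> \<in> B" unfolding B_def nerve_def Xm_def J'_def using nu 1 by auto
        then show ?thesis by blast
      next
        case 2 then show ?thesis using plus nu by blast
      next
        case 3
        then have "x \<in> hyp w h (insert k E)" using nu(3) unfolding hyp_def by auto
        then obtain y where "y\<in>X" "y \<in> hyp w h E" "(w k \<bullet> y - h k) * 1 > 0" "\<forall>j\<in>\<nu>. h j < w j \<bullet> y"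
          using pert[OF nu(2) _ nu(1) nu(4), of 1] by auto
        then show ?thesis using plus by auto
      qed
    next
      fix \<nu> assume "\<nu> \<in> B \<union> L \<union> insert k ` L"
      then show "\<nu> \<in> nerve w h J (X \<inter> hyp w h E)"
        unfolding B_def L_def nerve_def Xm_def Xp_def J'_def using kJ by auto
    qed
    have eq2: "L \<inter> B = M"
    proof (intro set_eqI iffI)
      fix \<nu> assume "\<nu> \<in> L \<inter> B"
      then obtain y z where nu: "\<nu> \<subseteq> J'" "y \<in> X" "y \<in> hyp w h E" "h k < w k \<bullet> y" "\<forall>j\<in>\<nu>. h j < w j \<bullet> y"
        "z \<in> X" "z \<in> hyp w h E" "w k \<bullet> z < h k" "\<forall>j\<in>\<nu>. h j < w j \<bullet> z"
        unfolding L_def B_def nerve_def Xp_def Xm_def by blast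
      define t where "t = (h k - w k \<bullet> z) / (w k \<bullet> y - w k \<bullet> z)"
      have t: "0 < t" "t < 1" using nu(4,8) unfolding t_def by (auto simp: field_simps)
      define p where "p = (1 - t) *\<^sub>R z + t *\<^sub>R y"
      have "p \<in> X" unfolding p_def using convexD[OF convX nu(6) nu(2)] t by auto
      moreover have "p \<in> hyp w h (insert k E)"
      proof -
        have "w k \<bullet> p = w k \<bullet> z + t * (w k \<bullet> y - w k \<bullet> z)"
          unfolding p_def by (simp add: inner_add_right algebra_simps)
        also have "t * (w k \<bullet> y - w k \<bullet> z) = h k - w k \<bullet> z"
          unfolding t_def using nu(4,8) by simp
        finally have "w k \<bullet> p = h k" by simp
        moreover have "\<forall>i\<in>E. w i \<bullet> p = h i" using nu(3,7) unfolding p_def hyp_def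
          by (simp add: inner_add_right algebra_simps)
        ultimately show ?thesis unfolding hyp_def by auto
      qed
      moreover have "\<forall>j\<in>\<nu>. h j < w j \<bullet> p"
      proof
        fix j assume j: "j \<in> \<nu>"
        have a: "h j < w j \<bullet> y" "h j < w j \<bullet> z" using nu(5,9) j by auto
        have "w j \<bullet> p = (1 - t) * (w j \<bullet> z) + t * (w j \<bullet> y)" unfolding p_def by (simp add: inner_add_right)
        also have "\<dots> > (1 - t) * h j + t * h j"
          using a t by (intro add_less_le_mono mult_strict_left_mono mult_left_mono) auto
        finally show "h j < w j \<bullet> p" by (simp add: algebra_simps)
      qed
      ultimately show "\<nu> \<in> M" unfolding M_def nerve_def using nu(1) by blast
    next
      fix \<nu> assume "\<nu> \<in> M"
      then obtain x where nu: "\<nu> \<subseteq> J'" "x \<in> X" "x \<in> hyp w h (insert k E)" "\<forall>j\<in>\<nu>. h j < w j \<bullet> x"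
        unfolding M_def nerve_def by blast
      have nJ: "\<nu> \<subseteq> J" using nu(1) unfolding J'_def by auto
      obtain y where y: "y\<in>X" "y \<in> hyp w h E" "(w k \<bullet> y - h k) * 1 > 0" "\<forall>j\<in>\<nu>. h j < w j \<bullet> y"
        using pert[OF nu(2,3) nJ nu(4), of 1] by auto
      obtain z where z: "z\<in>X" "z \<in> hyp w h E" "(w k \<bullet> z - h k) * (-1) > 0" "\<forall>j\<in>\<nu>. h j < w j \<bullet> z"
        using pert[OF nu(2,3) nJ nu(4), of "-1"] by auto
      have "\<nu> \<in> L" unfolding L_def nerve_def Xp_def using y nu(1) by auto
      moreover have "\<nu> \<in> B" unfolding B_def nerve_def Xm_def using z nu(1) by auto
      ultimately show "\<nu> \<in> L \<inter> B" by blast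
    qed
    have finL: "finite L"
      by (rule finite_subset[of _ "Pow J'"]) (auto simp: L_def nerve_def J'_def finJ)
    have kB: "\<forall>\<nu>\<in>B. k \<notin> \<nu>" "\<forall>\<nu>\<in>L. k \<notin> \<nu>" unfolding B_def L_def nerve_def J'_def by auto
    have dB: "\<forall>\<nu>\<in>B. \<forall>\<mu>. \<mu> \<subseteq> \<nu> \<longrightarrow> \<mu> \<in> B" unfolding B_def nerve_def by blast
    show ?thesis unfolding eq1 using comb[OF finL kB dB colB] colM eq2 by simp
  qed
qed



lemma hcode_eq: "hcode n w h X = {\<sigma>. \<exists>x\<in>X. \<sigma> = {i\<in>{1..n}. h i < w i \<bullet> x}}"
proof (intro set_eqI iffI)
  fix \<sigma> assume "\<sigma> \<in> hcode n w h X"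
  then obtain x where "\<sigma> \<subseteq> {1..n}" "x \<in> atom n w h X \<sigma>" unfolding hcode_def by blast
  then have "x \<in> X" "\<sigma> = {i\<in>{1..n}. h i < w i \<bullet> x}" unfolding atom_def by (auto split: if_splits)
  then show "\<sigma> \<in> {\<sigma>. \<exists>x\<in>X. \<sigma> = {i\<in>{1..n}. h i < w i \<bullet> x}}" by blast
next
  fix \<sigma> assume "\<sigma> \<in> {\<sigma>. \<exists>x\<in>X. \<sigma> = {i\<in>{1..n}. h i < w i \<bullet> x}}"
  then obtain x where x: "x \<in> X" "\<sigma> = {i\<in>{1..n}. h i < w i \<bullet> x}" by blast
  then have "x \<in> atom n w h X \<sigma>" unfolding atom_def by auto
  then show "\<sigma> \<in> hcode n w h X" unfolding hcode_def using x by auto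
qed

lemma flip_stable:
  assumes "stable_pair n w h X"
  shows "stable_pair n (\<lambda>i. if i \<in> g then - w i else w i) (\<lambda>i. if i \<in> g then - h i else h i) X"
proof -
  have e: "(\<lambda>i. {x. (if i \<in> g then - w i else w i) \<bullet> x - (if i \<in> g then - h i else h i) = 0})
        = (\<lambda>i. {x. w i \<bullet> x - h i = 0})" by (auto simp: fun_eq_iff)
  show ?thesis using assms unfolding stable_pair_def e by auto
qed

lemma flip_code:
  assumes st: "stable_pair n w h X" and g: "g \<subseteq> {1..n}"
  defines "w' \<equiv> (\<lambda>i. if i \<in> g then - w i else w i)" and "h' \<equiv> (\<lambda>i. if i \<in> g then - h i else h i)"
  shows "hcode n w' h' X = bitflip g ` hcode n w h X"
proof -
  have st': "stable_pair n w' h' X" unfolding w'_def h'_def by (rule flip_stable[OF st])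
  have gen: "bitflip g {i\<in>{1..n}. h i < w i \<bullet> y} = {i\<in>{1..n}. h' i < w' i \<bullet> y}"
    if "\<forall>i\<in>{1..n}. w i \<bullet> y \<noteq> h i" for y
    using that g unfolding bitflip_def w'_def h'_def by (force simp: not_less)
  have gen': "\<forall>i\<in>{1..n}. w' i \<bullet> y \<noteq> h' i" if "\<forall>i\<in>{1..n}. w i \<bullet> y \<noteq> h i" for y
    using that unfolding w'_def h'_def by auto
  have gen'': "\<forall>i\<in>{1..n}. w i \<bullet> y \<noteq> h i" if "\<forall>i\<in>{1..n}. w' i \<bullet> y \<noteq> h' i" for y
  proof
    fix i assume "i \<in> {1..n}"
    then have "w' i \<bullet> y \<noteq> h' i" using that by blast
    then show "w i \<bullet> y \<noteq> h i" unfolding w'_def h'_def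
      by (cases "i \<in> g") auto
  qed
  show ?thesis
  proof (intro set_eqI iffI)
    fix \<sigma> assume "\<sigma> \<in> hcode n w' h' X"
    then obtain x where x: "x \<in> X" "\<sigma> = {i\<in>{1..n}. h' i < w' i \<bullet> x}" unfolding hcode_eq by blast
    obtain y where y: "y \<in> X" "\<forall>i\<in>{1..n}. w' i \<bullet> y \<noteq> h' i"
      "{i\<in>{1..n}. h' i < w' i \<bullet> y} = {i\<in>{1..n}. h' i < w' i \<bullet> x}"
      using stable_generic[OF st' x(1)] by blast
    have "\<sigma> = bitflip g {i\<in>{1..n}. h i < w i \<bullet> y}" using gen[OF gen''[OF y(2)]] y(3) x(2) by simp
    then show "\<sigma> \<in> bitflip g ` hcode n w h X" unfolding hcode_eq using y(1) by blast
  next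
    fix \<sigma> assume "\<sigma> \<in> bitflip g ` hcode n w h X"
    then obtain x where x: "x \<in> X" "\<sigma> = bitflip g {i\<in>{1..n}. h i < w i \<bullet> x}" unfolding hcode_eq by blast
    obtain y where y: "y \<in> X" "\<forall>i\<in>{1..n}. w i \<bullet> y \<noteq> h i"
      "{i\<in>{1..n}. h i < w i \<bullet> y} = {i\<in>{1..n}. h i < w i \<bullet> x}"
      using stable_generic[OF st x(1)] by blast
    have "\<sigma> = {i\<in>{1..n}. h' i < w' i \<bullet> y}" using gen[OF y(2)] y(3) x(2) by simp
    then show "\<sigma> \<in> hcode n w' h' X" unfolding hcode_eq using y(1) by blast
  qed
qed

lemma main_noflip:
  assumes st: "stable_pair n w h (X::'a::euclidean_space set)" and \<tau>: "\<tau> \<subseteq> {1..n}"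
    and nt: "\<tau> \<notin> hcode n w h X"
  shows "collapsible (link \<tau> (Delta (hcode n w h X)))"
proof (cases "\<tau> \<in> Delta (hcode n w h X)")
  case False
  then show ?thesis unfolding link_def by (simp add: collapsible.void)
next
  case True
  define X' where "X' = X \<inter> (\<Inter>i\<in>\<tau>. {x. w i \<bullet> x > h i})"
  have fin: "finite \<tau>" using \<tau> finite_subset by blast
  have openX: "open X" and convX: "convex X" using st unfolding stable_pair_def by auto
  have st': "stable_pair n w h X'" unfolding X'_def
    by (rule stable_subset[OF st]) (auto intro!: open_Int openX open_INT fin open_halfspace_gt
        convex_Int convX convex_INT convex_halfspace_gt)
  have hyp0: "hyp w h {} = UNIV" unfolding hyp_def by simp
  have eq: "link \<tau> (Delta (hcode n w h X)) = nerve w h ({1..n} - \<tau>) (X' \<inter> hyp w h {})"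
  proof -
    have D: "\<And>\<nu>. \<nu> \<in> Delta (hcode n w h X) \<longleftrightarrow> (\<exists>x\<in>X. \<nu> \<subseteq> {i\<in>{1..n}. h i < w i \<bullet> x})"
      unfolding Delta_def hcode_eq by blast
    show ?thesis
    proof (intro set_eqI iffI)
      fix \<nu> assume "\<nu> \<in> link \<tau> (Delta (hcode n w h X))"
      then have a: "\<nu> \<inter> \<tau> = {}" "\<nu> \<union> \<tau> \<in> Delta (hcode n w h X)"
        unfolding link_def using True by auto
      then obtain x where x: "x \<in> X" "\<nu> \<union> \<tau> \<subseteq> {i\<in>{1..n}. h i < w i \<bullet> x}" using D by blast
      have "x \<in> X' \<inter> hyp w h {}" using x unfolding X'_def hyp0 by auto
      moreover have "\<nu> \<subseteq> {1..n} - \<tau>" using x(2) a(1) by auto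
      moreover have "\<forall>j\<in>\<nu>. h j < w j \<bullet> x" using x(2) by auto
      ultimately show "\<nu> \<in> nerve w h ({1..n} - \<tau>) (X' \<inter> hyp w h {})" unfolding nerve_def by blast
    next
      fix \<nu> assume "\<nu> \<in> nerve w h ({1..n} - \<tau>) (X' \<inter> hyp w h {})"
      then obtain x where x: "\<nu> \<subseteq> {1..n} - \<tau>" "x \<in> X'" "\<forall>j\<in>\<nu>. h j < w j \<bullet> x"
        unfolding nerve_def by blast
      have x2: "x \<in> X" "\<forall>i\<in>\<tau>. h i < w i \<bullet> x" using x(2) unfolding X'_def by auto
      have "\<nu> \<union> \<tau> \<subseteq> {i\<in>{1..n}. h i < w i \<bullet> x}" using x(1,3) x2(2) \<tau> by auto
      then have "\<nu> \<union> \<tau> \<in> Delta (hcode n w h X)" "\<nu> \<in> Delta (hcode n w h X)" using D x2(1) by blast+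
      moreover have "\<nu> \<inter> \<tau> = {}" using x(1) by auto
      ultimately show "\<nu> \<in> link \<tau> (Delta (hcode n w h X))" unfolding link_def using True by auto
    qed
  qed
  have cov: "\<forall>x\<in>X' \<inter> hyp w h {}. \<exists>j\<in>{1..n} - \<tau>. h j < w j \<bullet> x"
  proof
    fix x assume x: "x \<in> X' \<inter> hyp w h {}"
    then have "{i\<in>{1..n}. h i < w i \<bullet> x} \<in> hcode n w h X" unfolding hcode_eq X'_def by blast
    then have "{i\<in>{1..n}. h i < w i \<bullet> x} \<noteq> \<tau>" using nt by auto
    moreover have "\<tau> \<subseteq> {i\<in>{1..n}. h i < w i \<bullet> x}" using x \<tau> unfolding X'_def by auto
    ultimately show "\<exists>j\<in>{1..n} - \<tau>. h j < w j \<bullet> x" by blast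
  qed
  show ?thesis unfolding eq by (rule core[OF st']) (use cov in auto)
qed

theorem theoremA:
  fixes n :: nat and w :: "nat \<Rightarrow> 'a::euclidean_space" and h :: "nat \<Rightarrow> real" and X :: "'a set"
  assumes "stable_pair n w h X"
  shows "\<not> (\<exists>g \<tau>. g \<subseteq> {1..n} \<and> \<tau> \<subseteq> {1..n} \<and>
              \<tau> \<notin> bitflip g ` hcode n w h X \<and>
              \<not> collapsible (link \<tau> (Delta (bitflip g ` hcode n w h X))))"
proof
  assume "\<exists>g \<tau>. g \<subseteq> {1..n} \<and> \<tau> \<subseteq> {1..n} \<and>
              \<tau> \<notin> bitflip g ` hcode n w h X \<and>
              \<not> collapsible (link \<tau> (Delta (bitflip g ` hcode n w h X)))"
  then obtain g \<tau> where g: "g \<subseteq> {1..n}" "\<tau> \<subseteq> {1..n}" "\<tau> \<notin> bitflip g ` hcode n w h X"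
    "\<not> collapsible (link \<tau> (Delta (bitflip g ` hcode n w h X)))" by blast
  let ?w = "\<lambda>i. if i \<in> g then - w i else w i" and ?h = "\<lambda>i. if i \<in> g then - h i else h i"
  have c: "hcode n ?w ?h X = bitflip g ` hcode n w h X" by (rule flip_code[OF assms g(1)])
  have "collapsible (link \<tau> (Delta (hcode n ?w ?h X)))"
    by (rule main_noflip[OF flip_stable[OF assms] g(2)]) (use c g(3) in simp)
  then show False using c g(4) by simp
qed


end
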